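(* Let $x$ and $y$ be indeterminates that do not commute under multiplication (so $(x+y)^n$ is computed in the free associative algebra generated by $x$ and $y$), and let $n$ be a nonnegative integer. For $0\le k\le n$ and each $\lambda=(\lambda_1,\dots,\lambda_k)\in\mathcal{P}_{k,n-k}$, let $Q^\lambda x^{n-k}y^k$ denote the word obtained from the word $x^{n-k}y^k=\underbrace{x\cdots x}_{n-k}\underbrace{y\cdots y}_{k}$ by applying the product of transpositions $$Q^\lambda:=\prod_{j=1}^k (n-k+j,\; n-k+j-\lambda_j),$$ where applying the transposition $(i,j)$ to a word means swapping its $i$th and $j$th letters, and the factors are applied in the order $j=1$ first, then $j=2$, and so on up to $j=k$ (for $k=0$, $Q^\lambda$ is the identity). Then $$(x+y)^n=\sum_{k=0}^n\sum_{\lambda\in\mathcal{P}_{k,n-k}} Q^\lambda x^{n-k}y^k.$$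
   Context: For nonnegative integers $k$ and $m$, $\mathcal{P}_{k,m}$ denotes the set of integer tuples $(\lambda_1,\dots,\lambda_k)$ with $m\ge\lambda_1\ge\lambda_2\ge\cdots\ge\lambda_k\ge 0$, i.e. partitions with at most $k$ parts, each part at most $m$, padded with zeros to length $k$. ($\mathcal{P}_{0,m}$ consists of the single empty tuple.) For example, with $n-k=5$, $k=3$: $Q^{(3,1,0)}x^5y^3=(8,8)(7,6)(6,3)(xxxxxyyy)=xxyxxyxy$. *)

theory Defs
  imports Main
begin

text \<open>Words are bool lists (False = letter x, True = letter y); an element of the
  algebra is its coefficient function on words (finite support is automatic
  for the elements considered here).\<close>

type_synonym falg = "bool list \<Rightarrow> int"

definition fa_add :: "falg \<Rightarrow> falg \<Rightarrow> falg" where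
  "fa_add f g = (\<lambda>w. f w + g w)"

definition fa_mult :: "falg \<Rightarrow> falg \<Rightarrow> falg" where
  "fa_mult f g = (\<lambda>w. \<Sum>i\<le>length w. f (take i w) * g (drop i w))"

definition fa_word :: "bool list \<Rightarrow> falg" where
  "fa_word u = (\<lambda>w. if w = u then 1 else 0)"

definition fa_one :: falg where
  "fa_one = fa_word []"

definition fa_x :: falg where "fa_x = fa_word [False]"
definition fa_y :: falg where "fa_y = fa_word [True]"

fun fa_pow :: "falg \<Rightarrow> nat \<Rightarrow> falg" where
  "fa_pow f 0 = fa_one"
| "fa_pow f (Suc n) = fa_mult f (fa_pow f n)"

text \<open>P_{k,m}: partitions with at most k parts, each at most m, padded to length k.\<close>
definition partitions_km :: "nat \<Rightarrow> nat \<Rightarrow> nat list set" where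
  "partitions_km k m = {l. length l = k \<and> sorted_wrt (\<ge>) l \<and> (\<forall>a\<in>set l. a \<le> m)}"

text \<open>Swap the i-th and j-th letters (1-indexed).\<close>
definition swap_letters :: "'a list \<Rightarrow> nat \<Rightarrow> nat \<Rightarrow> 'a list" where
  "swap_letters w i j = w[i - 1 := w ! (j - 1), j - 1 := w ! (i - 1)]"

text \<open>Apply Q^lambda = prod_{j=1}^k (n-k+j, n-k+j-lambda_j), factor j=1 applied first.\<close>
definition apply_Q :: "nat \<Rightarrow> nat \<Rightarrow> nat list \<Rightarrow> 'a list \<Rightarrow> 'a list" where
  "apply_Q n k lam w =
     fold (\<lambda>j v. swap_letters v (n - k + j) (n - k + j - lam ! (j - 1))) [1..<k+1] w"

definition base_word :: "nat \<Rightarrow> nat \<Rightarrow> bool list" where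
  "base_word n k = replicate (n - k) False @ replicate k True"

end

theory Submission
  imports Defs
begin

lemma xy_val: "fa_add fa_x fa_y u = (if length u = 1 then 1 else 0)"
  by (cases u) (auto simp: fa_add_def fa_x_def fa_y_def fa_word_def)

lemma lhs: "fa_pow (fa_add fa_x fa_y) n = (\<lambda>w. if length w = n then 1 else 0)"
proof (induction n)
  case 0
  show ?case by (auto simp: fa_one_def fa_word_def fun_eq_iff)
next
  case (Suc n)
  show ?case
  proof
    fix w :: "bool list"
    have "fa_pow (fa_add fa_x fa_y) (Suc n) w =
      (\<Sum>i\<le>length w. if i = 1 then (if length w = Suc n then 1 else 0) else 0)"
      unfolding fa_pow.simps fa_mult_def Suc xy_val
      by (intro sum.cong) (auto simp: min_def)
    also have "\<dots> = (if length w = Suc n then 1 else 0)"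
      by (auto simp: sum.delta)
    finally show "fa_pow (fa_add fa_x fa_y) (Suc n) w = (if length w = Suc n then 1 else 0)" .
  qed
qed

lemma part_props:
  assumes "lam \<in> partitions_km k m"
  shows "length lam = k" "\<And>i. i < k \<Longrightarrow> lam ! i \<le> m"
    "\<And>i j. i < j \<Longrightarrow> j < k \<Longrightarrow> lam ! j \<le> lam ! i"
  using assms by (auto simp: partitions_km_def sorted_wrt_iff_nth_less)

lemma fold_state:
  assumes P: "lam \<in> partitions_km k (n - k)" and kn: "k \<le> n" and jk: "j \<le> k"
  shows "fold (\<lambda>j v. swap_letters v (n - k + j) (n - k + j - lam ! (j - 1))) [1..<j+1] (base_word n k)
     = map (\<lambda>m. (\<exists>i<j. m = n - k + i - lam ! i) \<or> n - k + j \<le> m) [0..<n]"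
  using jk
proof (induction j)
  case 0
  show ?case using kn by (auto simp: base_word_def intro!: nth_equalityI simp: nth_append split: if_splits)
next
  case (Suc j)
  note pp = part_props[OF P]
  let ?F = "(\<lambda>j v. swap_letters v (n - k + j) (n - k + j - lam ! (j - 1)))"
  let ?v = "map (\<lambda>m. (\<exists>i<j. m = n - k + i - lam ! i) \<or> n - k + j \<le> m) [0..<n]"
  have jk: "j < k" using Suc by simp
  have IH: "fold ?F [1..<j+1] (base_word n k) = ?v" using Suc by simp
  have "fold ?F [1..<Suc j+1] (base_word n k) = ?F (Suc j) ?v"
    using IH by simp
  also have "\<dots> = ?v[n - k + j := ?v ! (n - k + j - lam ! j), n - k + j - lam ! j := ?v ! (n - k + j)]"
    unfolding swap_letters_def using pp(2)[OF jk] by (simp add: Suc_diff_le)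
  also have "\<dots> = map (\<lambda>m. (\<exists>i<Suc j. m = n - k + i - lam ! i) \<or> n - k + Suc j \<le> m) [0..<n]"
  proof -
    have lt: "n - k + i - lam ! i < n - k + j - lam ! j" if "i < j" for i
      using pp(3)[OF that jk] pp(2)[OF jk] that by linarith
    have ql: "n - k + j - lam ! j \<le> n - k + j" by simp
    have vq: "?v ! (n - k + j - lam ! j) = (lam ! j = 0)"
    proof -
      have "\<not> (\<exists>i<j. n - k + j - lam ! j = n - k + i - lam ! i)"
        using lt by (metis less_not_refl3)
      moreover have "n - k + j - lam ! j < n" using jk kn by linarith
      ultimately show ?thesis using pp(2)[OF jk] by auto
    qed
    have vt: "?v ! (n - k + j) = True" using jk kn by auto
    show ?thesis
    proof (rule nth_equalityI)
      fix m assume "m < length (?v[n - k + j := ?v ! (n - k + j - lam ! j), n - k + j - lam ! j := ?v ! (n - k + j)])"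
      hence mn: "m < n" by simp
      consider "m = n - k + j - lam ! j" | "m = n - k + j" "lam ! j \<noteq> 0" | "m \<noteq> n - k + j - lam ! j" "m \<noteq> n - k + j"
        by linarith
      then show "(?v[n - k + j := ?v ! (n - k + j - lam ! j), n - k + j - lam ! j := ?v ! (n - k + j)]) ! m =
        map (\<lambda>m. (\<exists>i<Suc j. m = n - k + i - lam ! i) \<or> n - k + Suc j \<le> m) [0..<n] ! m"
      proof cases
        case 1
        then show ?thesis using mn jk kn vt by auto
      next
        case 2
        have "\<not> (\<exists>i<Suc j. m = n - k + i - lam ! i)"
        proof
          assume "\<exists>i<Suc j. m = n - k + i - lam ! i"
          then obtain i where "i < Suc j" "m = n - k + i - lam ! i" by blast
          then show False
          proof (cases "i = j")
            case True
            then show False using 2 \<open>m = n - k + i - lam ! i\<close> pp(2)[OF jk] unfolding True by linarith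
          next
            case False
            then show False using lt[of i] 2 \<open>i < Suc j\<close> \<open>m = n - k + i - lam ! i\<close> by simp
          qed
        qed
        then show ?thesis using 2 mn jk kn vq by (auto simp: nth_list_update)
      next
        case 3
        have "(\<exists>i<Suc j. m = n - k + i - lam ! i) = (\<exists>i<j. m = n - k + i - lam ! i)"
          using 3 less_Suc_eq by auto
        then show ?thesis using 3 mn jk kn by (auto simp: nth_list_update)
      qed
    qed simp
  qed
  finally show ?case .
qed

definition qs_of :: "nat \<Rightarrow> nat \<Rightarrow> nat list \<Rightarrow> nat list" where
  "qs_of n k lam = map (\<lambda>i. n - k + i - lam ! i) [0..<k]"

lemma applyQ:
  assumes P: "lam \<in> partitions_km k (n - k)" and kn: "k \<le> n"
  shows "apply_Q n k lam (base_word n k) = map (\<lambda>m. m \<in> set (qs_of n k lam)) [0..<n]"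
proof -
  have "apply_Q n k lam (base_word n k) = map (\<lambda>m. (\<exists>i<k. m = n - k + i - lam ! i) \<or> n - k + k \<le> m) [0..<n]"
    unfolding apply_Q_def using fold_state[OF P kn order_refl] by simp
  also have "\<dots> = map (\<lambda>m. m \<in> set (qs_of n k lam)) [0..<n]"
    using kn by (auto simp: qs_of_def)
  finally show ?thesis .
qed

lemma qs_sorted:
  assumes P: "lam \<in> partitions_km k (n - k)" and kn: "k \<le> n"
  shows "sorted_wrt (<) (qs_of n k lam)" "set (qs_of n k lam) \<subseteq> {..<n}" "length (qs_of n k lam) = k"
proof -
  note pp = part_props[OF P]
  show "sorted_wrt (<) (qs_of n k lam)"
    unfolding sorted_wrt_iff_nth_less qs_of_def
  proof (intro allI impI)
    fix i j assume "i < j" "j < length (map (\<lambda>i. n - k + i - lam ! i) [0..<k])"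
    hence ij: "i < j" "j < k" by auto
    show "map (\<lambda>i. n - k + i - lam ! i) [0..<k] ! i < map (\<lambda>i. n - k + i - lam ! i) [0..<k] ! j"
      using ij pp(3)[OF ij] pp(2)[OF ij(2)] by simp
  qed
  show "set (qs_of n k lam) \<subseteq> {..<n}" using kn by (auto simp: qs_of_def)
  show "length (qs_of n k lam) = k" by (simp add: qs_of_def)
qed

lemma sorted_gap:
  assumes "sorted_wrt (<) (xs :: nat list)" "i \<le> j" "j < length xs"
  shows "xs ! i + (j - i) \<le> xs ! j"
  using assms(2,3)
proof (induction j)
  case 0 then show ?case by simp
next
  case (Suc j)
  show ?case
  proof (cases "i = Suc j")
    case False
    hence "xs ! i + (j - i) \<le> xs ! j" using Suc by simp
    moreover have "xs ! j < xs ! Suc j" using assms(1) Suc.prems by (simp add: sorted_wrt_iff_nth_less)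
    ultimately show ?thesis using False Suc.prems by linarith
  qed simp
qed

lemma bij_main:
  "bij_betw (\<lambda>(k, lam). apply_Q n k lam (base_word n k))
     (SIGMA k:{0..n}. partitions_km k (n - k)) {v :: bool list. length v = n}"
proof (rule bij_betwI')
  fix a b
  assume a: "a \<in> (SIGMA k:{0..n}. partitions_km k (n - k))" and b: "b \<in> (SIGMA k:{0..n}. partitions_km k (n - k))"
  obtain k lam where a': "a = (k, lam)" "k \<le> n" "lam \<in> partitions_km k (n - k)" using a by auto
  obtain k' lam' where b': "b = (k', lam')" "k' \<le> n" "lam' \<in> partitions_km k' (n - k')" using b by auto
  show "((case a of (k, lam) \<Rightarrow> apply_Q n k lam (base_word n k)) =
        (case b of (k, lam) \<Rightarrow> apply_Q n k lam (base_word n k))) = (a = b)"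
  proof
    assume eq: "(case a of (k, lam) \<Rightarrow> apply_Q n k lam (base_word n k)) =
        (case b of (k, lam) \<Rightarrow> apply_Q n k lam (base_word n k))"
    have s: "set (qs_of n k lam) = set (qs_of n k' lam')"
    proof -
      have e: "map (\<lambda>m. m \<in> set (qs_of n k lam)) [0..<n] = map (\<lambda>m. m \<in> set (qs_of n k' lam')) [0..<n]"
        using eq a' b' applyQ by simp
      have "\<forall>m<n. (m \<in> set (qs_of n k lam)) = (m \<in> set (qs_of n k' lam'))"
      proof (intro allI impI)
        fix m assume "m < n"
        then show "(m \<in> set (qs_of n k lam)) = (m \<in> set (qs_of n k' lam'))"
          using arg_cong[OF e, of "\<lambda>l. l ! m"] by simp
      qed
      then show ?thesis using qs_sorted(2)[OF a'(3,2)] qs_sorted(2)[OF b'(3,2)] by blast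
    qed
    have qe: "qs_of n k lam = qs_of n k' lam'"
      using qs_sorted(1)[OF a'(3,2)] qs_sorted(1)[OF b'(3,2)] s strict_sorted_equal by metis
    hence kk: "k = k'" using qs_sorted(3)[OF a'(3,2)] qs_sorted(3)[OF b'(3,2)] by simp
    have "lam = lam'"
    proof (rule nth_equalityI)
      show "length lam = length lam'" using part_props(1)[OF a'(3)] part_props(1)[OF b'(3)] kk by simp
      fix i assume "i < length lam"
      hence i: "i < k" using part_props(1)[OF a'(3)] by simp
      have "qs_of n k lam ! i = qs_of n k lam' ! i" using qe kk by simp
      hence "n - k + i - lam ! i = n - k + i - lam' ! i" using i by (simp add: qs_of_def)
      note eqi = this
      have A: "lam ! i \<le> n - k" using part_props(2)[OF a'(3) i] .
      have ik': "i < k'" using i kk by simp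
      have B: "lam' ! i \<le> n - k" using part_props(2)[OF b'(3) ik'] kk by simp
      have A': "lam ! i \<le> n - k + i" using A by simp
      have B': "lam' ! i \<le> n - k + i" using B by simp
      have "lam ! i = (n - k + i) - (n - k + i - lam ! i)" using A' by simp
      also have "\<dots> = (n - k + i) - (n - k + i - lam' ! i)" using eqi by simp
      also have "\<dots> = lam' ! i" using B' by simp
      finally show "lam ! i = lam' ! i" .
    qed
    then show "a = b" using a' b' kk by simp
  qed simp
next
  fix a assume "a \<in> (SIGMA k:{0..n}. partitions_km k (n - k))"
  then obtain k lam where a': "a = (k, lam)" "k \<le> n" "lam \<in> partitions_km k (n - k)" by auto
  show "(case a of (k, lam) \<Rightarrow> apply_Q n k lam (base_word n k)) \<in> {v. length v = n}"
    using a' applyQ by simp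
next
  fix v :: "bool list" assume "v \<in> {v. length v = n}"
  hence vn: "length v = n" by simp
  define qs where "qs = filter (\<lambda>m. v ! m) [0..<n]"
  define k where "k = length qs"
  define lam where "lam = map (\<lambda>i. n - k + i - qs ! i) [0..<k]"
  have qsort: "sorted_wrt (<) qs" unfolding qs_def by (simp add: sorted_wrt_filter)
  have qset: "set qs = {m. m < n \<and> v ! m}" unfolding qs_def by auto
  have kn: "k \<le> n" unfolding k_def qs_def by (metis length_filter_le length_upt diff_zero)
  have lo: "i \<le> qs ! i" if "i < k" for i
    using sorted_gap[OF qsort, of 0 i] that k_def by simp
  have hi: "qs ! i \<le> n - k + i" if "i < k" for i
  proof -
    have "qs ! i + (k - 1 - i) \<le> qs ! (k - 1)" using sorted_gap[OF qsort, of i "k - 1"] that k_def by simp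
    moreover have "qs ! (k - 1) \<in> set qs" using that k_def by simp
    hence "qs ! (k - 1) < n" using qset by blast
    ultimately show ?thesis using that by linarith
  qed
  have P: "lam \<in> partitions_km k (n - k)"
    unfolding partitions_km_def
  proof (intro CollectI conjI)
    show "length lam = k" by (simp add: lam_def)
    show "sorted_wrt (\<ge>) lam"
      unfolding sorted_wrt_iff_nth_less
    proof (intro allI impI)
      fix i j assume ij: "i < j" "j < length lam"
      hence "j < k" by (simp add: lam_def)
      moreover have "qs ! i + (j - i) \<le> qs ! j" using sorted_gap[OF qsort, of i j] ij \<open>j < k\<close> k_def by simp
      ultimately show "lam ! j \<le> lam ! i" using ij hi[of i] hi[of j] by (simp add: lam_def)
    qed
    show "\<forall>a\<in>set lam. a \<le> n - k"
    proof
      fix a assume "a \<in> set lam"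
      then obtain i where i: "i < k" "a = n - k + i - qs ! i" by (auto simp: lam_def)
      have "i \<le> qs ! i" using lo[OF i(1)] .
      then show "a \<le> n - k" using i(2) by linarith
    qed
  qed
  have "qs_of n k lam = qs"
    by (rule nth_equalityI) (use hi in \<open>auto simp: qs_of_def lam_def k_def\<close>)
  hence e1: "apply_Q n k lam (base_word n k) = map (\<lambda>m. m \<in> set qs) [0..<n]"
    using applyQ[OF P kn] by simp
  have e2: "map (\<lambda>m. m \<in> set qs) [0..<n] = v"
  proof (rule nth_equalityI)
    show "length (map (\<lambda>m. m \<in> set qs) [0..<n]) = length v" using vn by simp
    fix m assume "m < length (map (\<lambda>m. m \<in> set qs) [0..<n])"
    hence m: "m < n" by simp
    have "(m \<in> set qs) = v ! m" unfolding qset using m by simp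
    then show "map (\<lambda>m. m \<in> set qs) [0..<n] ! m = v ! m" using m by simp
  qed
  show "\<exists>a\<in>(SIGMA k:{0..n}. partitions_km k (n - k)). v = (case a of (k, lam) \<Rightarrow> apply_Q n k lam (base_word n k))"
  proof (rule bexI[of _ "(k, lam)"])
    show "v = (case (k, lam) of (k, lam) \<Rightarrow> apply_Q n k lam (base_word n k))" using e1 e2 by simp
    show "(k, lam) \<in> (SIGMA k:{0..n}. partitions_km k (n - k))" using P kn by simp
  qed
qed

theorem theorem1:
  fixes n :: nat
  shows "fa_pow (fa_add fa_x fa_y) n =
    (\<lambda>w. \<Sum>k\<in>{0..n}. \<Sum>lam\<in>partitions_km k (n - k).
        fa_word (apply_Q n k lam (base_word n k)) w)"
proof
  fix w :: "bool list"
  have fin: "finite (partitions_km k m)" for k m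
  proof (rule finite_subset)
    show "partitions_km k m \<subseteq> {xs. set xs \<subseteq> {0..m} \<and> length xs = k}"
      by (auto simp: partitions_km_def)
    show "finite {xs. set xs \<subseteq> {0..m} \<and> length xs = k}"
      by (rule finite_lists_length_eq) simp
  qed
  have "(\<Sum>k\<in>{0..n}. \<Sum>lam\<in>partitions_km k (n - k). fa_word (apply_Q n k lam (base_word n k)) w)
     = (\<Sum>(k, lam)\<in>(SIGMA k:{0..n}. partitions_km k (n - k)). fa_word (apply_Q n k lam (base_word n k)) w)"
    by (rule sum.Sigma) (auto simp: fin)
  also have "\<dots> = (\<Sum>v\<in>{v :: bool list. length v = n}. fa_word v w)"
    using sum.reindex_bij_betw[OF bij_main, of "\<lambda>v. fa_word v w" n]
    by (simp add: case_prod_unfold)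
  also have "\<dots> = (if length w = n then 1 else 0)"
  proof -
    have fv: "finite {v :: bool list. length v = n}"
      using finite_lists_length_eq[of "UNIV :: bool set" n] by simp
    show ?thesis using fv by (simp add: fa_word_def sum.delta)
  qed
  finally show "fa_pow (fa_add fa_x fa_y) n w = (\<Sum>k\<in>{0..n}. \<Sum>lam\<in>partitions_km k (n - k).
        fa_word (apply_Q n k lam (base_word n k)) w)"
    by (simp add: lhs)
qed

end
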